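(* Let $f$ be either \textsc{OneMinMax} or \textsc{LOTZ}, and let $\mathrm{score}(x,P)$ be a diversity-favouring measure on $\{0,1\}^n\setminus\{0^n,1^n\}$ with respect to $f$. Assume the population $P$ is a subset of the Pareto set, $P\subseteq X^*$. Sort $P$ by non-increasing $\mathrm{score}(x,P)$ and consider a parent selection mechanism based on $\mathrm{score}$ such that $r_i$ is the probability of selecting the $i$-th element of $P$ in this sorted sequence. Then, unless $P$ already covers the Pareto front (i.e. $f(P)=F^*$), the probability of selecting a good individual is at least $\min\{r_1,r_2,r_3\}$.
   Context: Search space $\{0,1\}^n$; objectives maximised. $\textsc{OneMinMax}(x)=(\sum_ix_i,\,n-\sum_ix_i)$; $\textsc{LOTZ}(x)=(\mathrm{LO}(x),\mathrm{TZ}(x))$ with $\mathrm{LO}$ the number of leading ones and $\mathrm{TZ}$ the number of trailing zeros. Dominance: $y$ dominates $x$ if $f_i(y)\ge f_i(x)$ for all $i$, strictly for some $i$. Pareto set $X^*$ (non-dominated points; all of $\{0,1\}^n$ for \textsc{OneMinMax}, $\{1^i0^{n-i}\}$ for \textsc{LOTZ}), Pareto front $F^*=f(X^* )$. Populations contain points with distinct objective vectors. Good: w.r.t. $P$, $x\in P\cap X^*$ is good if some Hamming neighbour $y$ of $x$ satisfies $y\in X^*$ and $f(y)\notin f(P)$; otherwise bad. A measure is diversity-favouring on $S$ (w.r.t. $f$) if for every population $P$ and all $x,y\in P\cap X^*\cap S$ with $x$ bad and $y$ good, $\mathrm{score}(x,P)<\mathrm{score}(y,P)$. *)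

theory Defs
  imports Complex_Main
begin

text \<open>Bit strings of length n are boolean lists of length n (True = 1).\<close>

definition cube :: "nat \<Rightarrow> bool list set" where
  "cube n = {x. length x = n}"

definition oneminmax :: "bool list \<Rightarrow> nat \<times> nat" where
  "oneminmax x = (length (filter id x), length (filter Not x))"

definition LO :: "bool list \<Rightarrow> nat" where
  "LO x = length (takeWhile id x)"

definition TZ :: "bool list \<Rightarrow> nat" where
  "TZ x = length (takeWhile Not (rev x))"

definition lotz :: "bool list \<Rightarrow> nat \<times> nat" where
  "lotz x = (LO x, TZ x)"

definition dominates :: "(bool list \<Rightarrow> nat \<times> nat) \<Rightarrow> bool list \<Rightarrow> bool list \<Rightarrow> bool" where
  "dominates f y x \<longleftrightarrow>
     fst (f y) \<ge> fst (f x) \<and> snd (f y) \<ge> snd (f x) \<and>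
     (fst (f y) > fst (f x) \<or> snd (f y) > snd (f x))"

definition pareto_set :: "nat \<Rightarrow> (bool list \<Rightarrow> nat \<times> nat) \<Rightarrow> bool list set" where
  "pareto_set n f = {x \<in> cube n. \<not> (\<exists>y \<in> cube n. dominates f y x)}"

definition pareto_front :: "nat \<Rightarrow> (bool list \<Rightarrow> nat \<times> nat) \<Rightarrow> (nat \<times> nat) set" where
  "pareto_front n f = f ` pareto_set n f"

definition hamming_neighbour :: "bool list \<Rightarrow> bool list \<Rightarrow> bool" where
  "hamming_neighbour x y \<longleftrightarrow>
     length x = length y \<and> card {i. i < length x \<and> x ! i \<noteq> y ! i} = 1"

definition population :: "nat \<Rightarrow> (bool list \<Rightarrow> nat \<times> nat) \<Rightarrow> bool list set \<Rightarrow> bool" where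
  "population n f P \<longleftrightarrow> P \<subseteq> cube n \<and> finite P \<and> P \<noteq> {} \<and> inj_on f P"

definition good :: "nat \<Rightarrow> (bool list \<Rightarrow> nat \<times> nat) \<Rightarrow> bool list set \<Rightarrow> bool list \<Rightarrow> bool" where
  "good n f P x \<longleftrightarrow> x \<in> P \<inter> pareto_set n f \<and>
     (\<exists>y. hamming_neighbour x y \<and> y \<in> pareto_set n f \<and> f y \<notin> f ` P)"

definition bad :: "nat \<Rightarrow> (bool list \<Rightarrow> nat \<times> nat) \<Rightarrow> bool list set \<Rightarrow> bool list \<Rightarrow> bool" where
  "bad n f P x \<longleftrightarrow> x \<in> P \<inter> pareto_set n f \<and> \<not> good n f P x"

definition diversity_favouring ::
  "nat \<Rightarrow> (bool list \<Rightarrow> nat \<times> nat) \<Rightarrow> bool list set \<Rightarrow> (bool list \<Rightarrow> bool list set \<Rightarrow> real) \<Rightarrow> bool" where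
  "diversity_favouring n f S score \<longleftrightarrow>
     (\<forall>P. population n f P \<longrightarrow>
        (\<forall>x y. x \<in> P \<inter> pareto_set n f \<inter> S \<longrightarrow> y \<in> P \<inter> pareto_set n f \<inter> S \<longrightarrow>
               bad n f P x \<longrightarrow> good n f P y \<longrightarrow> score x P < score y P))"

end

theory Submission
  imports Defs
begin


lemma hn_upd:
  assumes "i < length x" "x ! i \<noteq> b"
  shows "hamming_neighbour x (x[i:=b])"
proof -
  have "{j. j < length x \<and> x ! j \<noteq> x[i:=b] ! j} = {i}"
    using assms by (auto simp: nth_list_update)
  thus ?thesis by (simp add: hamming_neighbour_def)
qed

lemma len_filter_upd:
  "i < length xs \<Longrightarrow> length (filter P (xs[i:=v])) + (if P (xs!i) then 1 else 0)
     = length (filter P xs) + (if P v then 1 else 0)"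
proof (induction xs arbitrary: i)
  case Nil then show ?case by simp
next
  case (Cons a xs) then show ?case by (cases i) auto
qed

lemma comb:
  fixes L :: "nat set"
  assumes "finite L" "L \<subseteq> {0..n}" "m \<le> n" "m \<notin> L" "L \<noteq> {}"
  shows "\<exists>j\<in>L. (j + 1 \<le> n \<and> j + 1 \<notin> L) \<or> (j \<ge> 1 \<and> j - 1 \<notin> L)"
    and "card L \<ge> 3 \<Longrightarrow> \<exists>j\<in>L. 0 < j \<and> j < n \<and> ((j + 1 \<le> n \<and> j + 1 \<notin> L) \<or> (j \<ge> 1 \<and> j - 1 \<notin> L))"
proof -
  define A where "A = {j\<in>L. j < m}"
  define B where "B = {j\<in>L. j > m}"
  have fA: "finite A" "finite B" using assms(1) by (auto simp: A_def B_def)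
  have LAB: "L = A \<union> B"
  proof (intro equalityI subsetI)
    fix x assume x: "x \<in> L"
    then have "x \<noteq> m" using assms(4) by auto
    then show "x \<in> A \<union> B" using x by (cases "x < m") (auto simp: A_def B_def)
  qed (auto simp: A_def B_def)
  have hA: "Max A \<in> L \<and> Max A + 1 \<le> n \<and> Max A + 1 \<notin> L" if "A \<noteq> {}"
  proof -
    have "Max A \<in> A" using Max_in fA that by blast
    moreover have "Max A + 1 \<notin> A"
    proof
      assume "Max A + 1 \<in> A"
      hence "Max A + 1 \<le> Max A" using Max_ge fA by blast
      thus False by simp
    qed
    ultimately show ?thesis using assms(3,4) by (auto simp: A_def) (metis Suc_lessI)
  qed
  have hB: "Min B \<in> L \<and> Min B \<ge> 1 \<and> Min B - 1 \<notin> L" if "B \<noteq> {}"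
  proof -
    have "Min B \<in> B" using Min_in fA that by blast
    moreover have "Min B - 1 \<notin> B"
    proof
      assume "Min B - 1 \<in> B"
      hence "Min B \<le> Min B - 1" using Min_le fA by blast
      moreover have "Min B > 0" using \<open>Min B \<in> B\<close> by (auto simp: B_def)
      ultimately show False by simp
    qed
    moreover have "Min B > m" using \<open>Min B \<in> B\<close> by (auto simp: B_def)
    ultimately show ?thesis using assms(3,4)
      by (cases "Min B - 1 = m") (auto simp: B_def)
  qed
  show "\<exists>j\<in>L. (j + 1 \<le> n \<and> j + 1 \<notin> L) \<or> (j \<ge> 1 \<and> j - 1 \<notin> L)"
  proof (cases "A = {}")
    case False with hA show ?thesis by blast
  next
    case True then have "B \<noteq> {}" using LAB assms(5) by auto
    with hB show ?thesis by blast
  qed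
  assume c: "card L \<ge> 3"
  show "\<exists>j\<in>L. 0 < j \<and> j < n \<and> ((j + 1 \<le> n \<and> j + 1 \<notin> L) \<or> (j \<ge> 1 \<and> j - 1 \<notin> L))"
  proof (rule ccontr)
    assume nc: "\<not> ?thesis"
    have "A \<subseteq> {0}"
    proof
      fix a assume a: "a \<in> A"
      hence "Max A \<ge> a" using fA Max_ge by blast
      moreover have "Max A = 0"
      proof -
        have "A \<noteq> {}" using a by auto
        note h = hA[OF this]
        show ?thesis
        proof (rule ccontr)
          assume "Max A \<noteq> 0"
          with h have "\<exists>j\<in>L. 0 < j \<and> j < n \<and> ((j + 1 \<le> n \<and> j + 1 \<notin> L) \<or> (j \<ge> 1 \<and> j - 1 \<notin> L))"
            by (intro bexI[of _ "Max A"]) auto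
          with nc show False by blast
        qed
      qed
      ultimately show "a \<in> {0}" by simp
    qed
    moreover have "B \<subseteq> {n}"
    proof
      fix a assume a: "a \<in> B"
      hence "Min B \<le> a" using fA Min_le by blast
      moreover have "a \<le> n" using a assms(2) by (auto simp: B_def)
      moreover have "Min B = n"
      proof -
        have "B \<noteq> {}" using a by auto
        hence "Min B \<in> B" using Min_in fA by blast
        hence "Min B \<le> n" using assms(2) by (auto simp: B_def)
        note h = hB[OF \<open>B \<noteq> {}\<close>]
        show ?thesis
        proof (rule ccontr)
          assume "Min B \<noteq> n"
          with h \<open>Min B \<le> n\<close> have "\<exists>j\<in>L. 0 < j \<and> j < n \<and> ((j + 1 \<le> n \<and> j + 1 \<notin> L) \<or> (j \<ge> 1 \<and> j - 1 \<notin> L))"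
            by (intro bexI[of _ "Min B"]) auto
          with nc show False by blast
        qed
      qed
      ultimately show "a \<in> {n}" by simp
    qed
    ultimately have "L \<subseteq> {0, n}" using LAB by auto
    hence "card L \<le> card {0, n}" by (intro card_mono) auto
    also have "\<dots> \<le> 2" by (simp add: card_insert_if)
    finally have "card L \<le> 2" .
    thus False using c by simp
  qed
qed



definition cnt :: "bool list \<Rightarrow> nat" where "cnt x = length (filter id x)"

lemma omm_sum: "length (filter id x) + length (filter Not x) = length x"
  using sum_length_filter_compl[of id x] by (simp add: comp_def)

lemma omm_pareto: "pareto_set n oneminmax = cube n"
proof -
  have "\<not> dominates oneminmax y x" if "x \<in> cube n" "y \<in> cube n" for x y
    using that omm_sum[of x] omm_sum[of y] by (auto simp: dominates_def oneminmax_def cube_def)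
  then show ?thesis by (auto simp: pareto_set_def)
qed

lemma omm_H1: "x \<in> pareto_set n oneminmax \<Longrightarrow> cnt x \<le> n \<and> oneminmax x = (cnt x, n - cnt x)"
  using omm_sum[of x] by (auto simp: omm_pareto cube_def cnt_def oneminmax_def)

lemma omm_H3u: "x \<in> pareto_set n oneminmax \<Longrightarrow> cnt x < n \<Longrightarrow>
   \<exists>y\<in>pareto_set n oneminmax. hamming_neighbour x y \<and> cnt y = cnt x + 1"
proof -
  assume x: "x \<in> pareto_set n oneminmax" "cnt x < n"
  then have len: "length x = n" by (auto simp: omm_pareto cube_def)
  have "\<not> (\<forall>a\<in>set x. id a)"
  proof
    assume "\<forall>a\<in>set x. id a"
    then have "filter id x = x" by (rule filter_True)
    then show False using x len by (simp add: cnt_def)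
  qed
  then obtain i where i: "i < length x" "\<not> x ! i" by (auto simp: in_set_conv_nth)
  define y where "y = x[i := True]"
  have "hamming_neighbour x y" unfolding y_def using i by (intro hn_upd) auto
  moreover have "cnt y = cnt x + 1" using len_filter_upd[OF i(1), of id True] i by (simp add: y_def cnt_def)
  moreover have "y \<in> pareto_set n oneminmax" using len by (simp add: y_def omm_pareto cube_def)
  ultimately show ?thesis by blast
qed

lemma omm_H3d: "x \<in> pareto_set n oneminmax \<Longrightarrow> 0 < cnt x \<Longrightarrow>
   \<exists>y\<in>pareto_set n oneminmax. hamming_neighbour x y \<and> cnt y = cnt x - 1"
proof -
  assume x: "x \<in> pareto_set n oneminmax" "0 < cnt x"
  then have len: "length x = n" by (auto simp: omm_pareto cube_def)
  have "\<not> (\<forall>a\<in>set x. \<not> id a)"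
  proof
    assume "\<forall>a\<in>set x. \<not> id a"
    then have "filter id x = []" by (rule filter_False)
    then show False using x by (simp add: cnt_def)
  qed
  then obtain i where i: "i < length x" "x ! i" by (auto simp: in_set_conv_nth)
  define y where "y = x[i := False]"
  have "hamming_neighbour x y" unfolding y_def using i by (intro hn_upd) auto
  moreover have "cnt y = cnt x - 1" using len_filter_upd[OF i(1), of id False] i by (simp add: y_def cnt_def)
  moreover have "y \<in> pareto_set n oneminmax" using len by (simp add: y_def omm_pareto cube_def)
  ultimately show ?thesis by blast
qed

lemma omm_H4: "cnt (replicate n False) = 0" "cnt (replicate n True) = n"
  by (simp_all add: cnt_def)



definition pt :: "nat \<Rightarrow> nat \<Rightarrow> bool list" where
  "pt n i = replicate i True @ replicate (n - i) False"

lemma takeWhile_replicate: "takeWhile P (replicate k a) = (if P a then replicate k a else [])"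
  by (induction k) auto

lemma takeWhile_replicate_app: "takeWhile P (replicate k a @ ys) =
   (if k = 0 then takeWhile P ys else if P a then replicate k a @ takeWhile P ys else [])"
  by (induction k) auto

lemma pt_len: "length (pt n i) = (if i \<le> n then n else i)"
  by (simp add: pt_def)

lemma LO_pt: "LO (pt n i) = i"
  by (simp add: pt_def LO_def takeWhile_replicate_app takeWhile_replicate)

lemma TZ_pt: "TZ (pt n i) = n - i"
  by (simp add: pt_def TZ_def takeWhile_replicate_app takeWhile_replicate)

lemma pt_nth: "j < length (pt n i) \<Longrightarrow> pt n i ! j = (j < i)"
  by (auto simp: pt_def nth_append)

lemma LO_prop: "j < LO x \<Longrightarrow> x ! j"
proof -
  assume j: "j < LO x"
  then have "takeWhile id x ! j = x ! j" unfolding LO_def by (rule takeWhile_nth)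
  moreover have "takeWhile id x ! j \<in> set (takeWhile id x)" using j unfolding LO_def by simp
  ultimately show ?thesis by (metis id_apply set_takeWhileD)
qed

lemma TZ_prop: "j < TZ x \<Longrightarrow> \<not> x ! (length x - Suc j)"
proof -
  assume j: "j < TZ x"
  then have "takeWhile Not (rev x) ! j = rev x ! j" unfolding TZ_def by (rule takeWhile_nth)
  moreover have "takeWhile Not (rev x) ! j \<in> set (takeWhile Not (rev x))" using j unfolding TZ_def by simp
  moreover have "j < length x" using j length_takeWhile_le[of Not "rev x"] unfolding TZ_def by simp
  ultimately show ?thesis by (metis rev_nth set_takeWhileD)
qed

lemma LO_le: "LO x \<le> length x" unfolding LO_def by (rule length_takeWhile_le)

lemma LOTZ_le: "LO x + TZ x \<le> length x"
proof (rule ccontr)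
  assume a: "\<not> ?thesis"
  have t: "TZ x \<le> length x" unfolding TZ_def using length_takeWhile_le[of Not "rev x"] by simp
  have l: "LO x \<le> length x" by (rule LO_le)
  define p where "p = LO x - 1"
  have "LO x \<ge> 1" using a t by simp
  then have "x ! p" using LO_prop[of p x] by (simp add: p_def)
  moreover have "length x - LO x < TZ x" using a l by simp
  then have "\<not> x ! (length x - Suc (length x - LO x))" by (rule TZ_prop)
  moreover have "length x - Suc (length x - LO x) = p" using \<open>LO x \<ge> 1\<close> l by (simp add: p_def)
  ultimately show False by simp
qed

lemma LOTZ_eq: "LO x + TZ x = length x \<Longrightarrow> x = pt (length x) (LO x)"
proof (rule nth_equalityI)
  assume e: "LO x + TZ x = length x"
  show "length x = length (pt (length x) (LO x))" using LO_le[of x] by (simp add: pt_len)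
  fix j assume j: "j < length x"
  show "x ! j = pt (length x) (LO x) ! j"
  proof (cases "j < LO x")
    case True then show ?thesis using LO_prop[OF True] j LO_le[of x] by (simp add: pt_nth pt_len)
  next
    case False
    have "length x - Suc j < TZ x" using False e j by simp
    then have "\<not> x ! (length x - Suc (length x - Suc j))" by (rule TZ_prop)
    moreover have "length x - Suc (length x - Suc j) = j" using j by simp
    ultimately show ?thesis using False j LO_le[of x] by (simp add: pt_nth pt_len)
  qed
qed

lemma pt_pareto: "i \<le> n \<Longrightarrow> pt n i \<in> pareto_set n lotz"
proof -
  assume i: "i \<le> n"
  have "\<not> dominates lotz y (pt n i)" if "y \<in> cube n" for y
    using LOTZ_le[of y] that i by (auto simp: dominates_def lotz_def LO_pt TZ_pt cube_def)
  then show ?thesis using i by (auto simp: pareto_set_def cube_def pt_len)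
qed

lemma pareto_pt: "x \<in> pareto_set n lotz \<Longrightarrow> x = pt n (LO x) \<and> LO x \<le> n"
proof -
  assume x: "x \<in> pareto_set n lotz"
  then have len: "length x = n" by (auto simp: pareto_set_def cube_def)
  have "LO x + TZ x = n"
  proof (rule ccontr)
    assume "LO x + TZ x \<noteq> n"
    then have lt: "LO x + TZ x < n" using LOTZ_le[of x] len by simp
    have "pt n (LO x) \<in> cube n" using lt by (simp add: cube_def pt_len)
    moreover have "dominates lotz (pt n (LO x)) x" using lt by (auto simp: dominates_def lotz_def LO_pt TZ_pt)
    ultimately show False using x by (auto simp: pareto_set_def)
  qed
  then show ?thesis using LOTZ_eq[of x] len by simp
qed

lemma lotz_H1: "x \<in> pareto_set n lotz \<Longrightarrow> LO x \<le> n \<and> lotz x = (LO x, n - LO x)"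
  using pareto_pt[of x n] by (metis TZ_pt lotz_def)

lemma pt_up: "i < n \<Longrightarrow> pt n (i+1) = (pt n i)[i := True]"
proof (rule nth_equalityI)
  assume i: "i < n"
  show "length (pt n (i+1)) = length ((pt n i)[i := True])" using i by (simp add: pt_len)
  fix j assume "j < length (pt n (i+1))"
  then have j: "j < n" using i by (simp add: pt_len)
  show "pt n (i+1) ! j = (pt n i)[i := True] ! j"
    using i j by (cases "j = i") (simp_all add: pt_len pt_nth nth_list_update less_Suc_eq)
qed

lemma pt_down: "0 < i \<Longrightarrow> i \<le> n \<Longrightarrow> pt n (i-1) = (pt n i)[i - 1 := False]"
proof (rule nth_equalityI)
  assume i: "0 < i" "i \<le> n"
  show "length (pt n (i-1)) = length ((pt n i)[i - 1 := False])" using i by (simp add: pt_len)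
  fix j assume "j < length (pt n (i-1))"
  then have j: "j < n" using i by (simp add: pt_len split: if_splits)
  show "pt n (i-1) ! j = (pt n i)[i - 1 := False] ! j"
    using i j by (cases "j = i - 1") (simp_all add: pt_len pt_nth nth_list_update, linarith)
qed

lemma lotz_H3u: "x \<in> pareto_set n lotz \<Longrightarrow> LO x < n \<Longrightarrow>
   \<exists>y\<in>pareto_set n lotz. hamming_neighbour x y \<and> LO y = LO x + 1"
proof -
  assume x: "x \<in> pareto_set n lotz" "LO x < n"
  define i where "i = LO x"
  have xe: "x = pt n i" using pareto_pt[OF x(1)] by (simp add: i_def)
  have il: "i < n" using x(2) by (simp add: i_def)
  have l: "length (pt n i) = n" using il by (simp add: pt_len)
  have v: "pt n i ! i = False" using pt_nth[of i n i] l il by simp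
  have "hamming_neighbour (pt n i) ((pt n i)[i := True])"
    using l v il by (intro hn_upd) simp_all
  then have h: "hamming_neighbour x (pt n (i+1))" using pt_up[OF il] xe by simp
  have p: "pt n (i+1) \<in> pareto_set n lotz" using il by (intro pt_pareto) simp
  show ?thesis using h p by (intro bexI[of _ "pt n (i+1)"]) (simp_all add: LO_pt i_def)
qed

lemma lotz_H3d: "x \<in> pareto_set n lotz \<Longrightarrow> 0 < LO x \<Longrightarrow>
   \<exists>y\<in>pareto_set n lotz. hamming_neighbour x y \<and> LO y = LO x - 1"
proof -
  assume x: "x \<in> pareto_set n lotz" "0 < LO x"
  define i where "i = LO x"
  have xe: "x = pt n i" and iN: "i \<le> n" using pareto_pt[OF x(1)] by (simp_all add: i_def)
  have i0: "0 < i" using x(2) by (simp add: i_def)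
  have l: "length (pt n i) = n" using iN by (simp add: pt_len)
  have v: "pt n i ! (i - 1) = True" using pt_nth[of "i - 1" n i] l iN i0 by simp
  have "hamming_neighbour (pt n i) ((pt n i)[i - 1 := False])"
    using l v iN i0 by (intro hn_upd) simp_all
  then have h: "hamming_neighbour x (pt n (i-1))" using pt_down[OF i0 iN] xe by simp
  have p: "pt n (i-1) \<in> pareto_set n lotz" using iN by (intro pt_pareto) simp
  show ?thesis using h p by (intro bexI[of _ "pt n (i-1)"]) (simp_all add: LO_pt i_def)
qed

lemma lotz_H4: "LO (replicate n False) = 0" "LO (replicate n True) = n"
  by (simp_all add: LO_def takeWhile_replicate)



lemma generic:
  fixes n :: nat and f :: "bool list \<Rightarrow> nat \<times> nat"
    and score :: "bool list \<Rightarrow> bool list set \<Rightarrow> real"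
    and P :: "bool list set" and \<sigma> :: "nat \<Rightarrow> bool list" and r :: "nat \<Rightarrow> real"
    and lev :: "bool list \<Rightarrow> nat"
  assumes H1: "\<And>x. x \<in> pareto_set n f \<Longrightarrow> lev x \<le> n \<and> f x = (lev x, n - lev x)"
    and H3u: "\<And>x. x \<in> pareto_set n f \<Longrightarrow> lev x < n \<Longrightarrow> \<exists>y\<in>pareto_set n f. hamming_neighbour x y \<and> lev y = lev x + 1"
    and H3d: "\<And>x. x \<in> pareto_set n f \<Longrightarrow> 0 < lev x \<Longrightarrow> \<exists>y\<in>pareto_set n f. hamming_neighbour x y \<and> lev y = lev x - 1"
    and H4: "lev (replicate n False) = 0" "lev (replicate n True) = n"
    and df: "diversity_favouring n f (cube n - {replicate n False, replicate n True}) score"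
    and pop: "population n f P"
    and Pp: "P \<subseteq> pareto_set n f"
    and bij: "bij_betw \<sigma> {1..card P} P"
    and sc: "\<And>i j. 1 \<le> i \<Longrightarrow> i \<le> j \<Longrightarrow> j \<le> card P \<Longrightarrow> score (\<sigma> i) P \<ge> score (\<sigma> j) P"
    and rnn: "\<And>i. r i \<ge> 0"
    and "(\<Sum>i\<in>{1..card P}. r i) = 1"
    and notfront: "f ` P \<noteq> pareto_front n f"
  shows "(\<Sum>i\<in>{i \<in> {1..card P}. good n f P (\<sigma> i)}. r i) \<ge> Min {r 1, r 2, r 3}"
proof -
  have pc: "pareto_set n f \<subseteq> cube n" by (auto simp: pareto_set_def)
  have finP: "finite P" and injf: "inj_on f P" and neP: "P \<noteq> {}"
    using pop by (auto simp: population_def)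
  define L where "L = lev ` P"
  have injl: "inj_on lev P"
  proof (rule inj_onI)
    fix x y assume xy: "x \<in> P" "y \<in> P" "lev x = lev y"
    then have "f x = f y" using H1 Pp by (metis subsetD)
    then show "x = y" using injf xy by (meson inj_onD)
  qed
  have cardL: "card L = card P" unfolding L_def using injl by (rule card_image)
  have finL: "finite L" using finP by (simp add: L_def)
  have Lsub: "L \<subseteq> {0..n}" using H1 Pp by (auto simp: L_def)
  have neL: "L \<noteq> {}" using neP by (simp add: L_def)
  have goodI: "good n f P x" if x: "x \<in> P" and k: "k \<le> n" "k \<notin> L"
     and kk: "k = lev x + 1 \<or> (0 < lev x \<and> k = lev x - 1)" for x k
  proof -
    have xp: "x \<in> pareto_set n f" using x Pp by auto
    obtain y where y: "y \<in> pareto_set n f" "hamming_neighbour x y" "lev y = k"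
      using kk
    proof
      assume "k = lev x + 1"
      then show ?thesis using H3u[OF xp] k that by auto
    next
      assume "0 < lev x \<and> k = lev x - 1"
      then show ?thesis using H3d[OF xp] that by auto
    qed
    have "f y \<notin> f ` P"
    proof
      assume "f y \<in> f ` P"
      then obtain z where z: "z \<in> P" "f z = f y" by auto
      then have "lev z = lev y" using H1[OF y(1)] H1[of z] Pp by auto
      then show False using z y k by (auto simp: L_def)
    qed
    then show ?thesis using y xp x by (auto simp: good_def)
  qed
  obtain m where m: "m \<le> n" "m \<notin> L"
  proof (rule ccontr)
    assume "\<not> thesis"
    then have all: "\<And>m. m \<le> n \<Longrightarrow> m \<in> L" using that by blast
    have "pareto_front n f \<subseteq> f ` P"
    proof
      fix v assume "v \<in> pareto_front n f"
      then obtain x where x: "x \<in> pareto_set n f" "v = f x" by (auto simp: pareto_front_def)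
      then have "lev x \<in> L" using H1 all by auto
      then obtain z where z: "z \<in> P" "lev z = lev x" by (auto simp: L_def)
      then have "f z = f x" using H1[OF x(1)] H1[of z] Pp by auto
      then show "v \<in> f ` P" using z x by (metis image_eqI)
    qed
    moreover have "f ` P \<subseteq> pareto_front n f" using Pp by (auto simp: pareto_front_def)
    ultimately show False using notfront by blast
  qed
  have exgood: "\<exists>g\<in>P. good n f P g"
  proof -
    obtain j where j: "j \<in> L" "(j + 1 \<le> n \<and> j + 1 \<notin> L) \<or> (j \<ge> 1 \<and> j - 1 \<notin> L)"
      using comb(1)[OF finL Lsub m neL] by blast
    then obtain g where g: "g \<in> P" "lev g = j" by (auto simp: L_def)
    have "j \<le> n" using j Lsub by auto
    then have "good n f P g" using j g goodI[of g] by (metis diff_le_self le_trans less_le_trans zero_less_one)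
    then show ?thesis using g by blast
  qed
  have exgoodS: "\<exists>g\<in>P. good n f P g \<and> g \<in> cube n - {replicate n False, replicate n True}"
    if c3: "card P \<ge> 3"
  proof -
    obtain j where j: "j \<in> L" "0 < j" "j < n" "(j + 1 \<le> n \<and> j + 1 \<notin> L) \<or> (j \<ge> 1 \<and> j - 1 \<notin> L)"
      using comb(2)[OF finL Lsub m neL] c3 cardL by auto
    then obtain g where g: "g \<in> P" "lev g = j" by (auto simp: L_def)
    then have "good n f P g" using j g goodI[of g] by (metis diff_le_self le_trans less_le_trans zero_less_one less_imp_le)
    moreover have "g \<in> cube n" using g Pp pc by auto
    moreover have "g \<noteq> replicate n False" "g \<noteq> replicate n True" using g j H4 by auto
    ultimately show ?thesis using g by blast
  qed
  have key: "\<exists>i. 1 \<le> i \<and> i \<le> 3 \<and> i \<le> card P \<and> good n f P (\<sigma> i)"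
  proof (cases "card P \<le> 3")
    case True
    obtain g where g: "g \<in> P" "good n f P g" using exgood by blast
    then obtain i where "i \<in> {1..card P}" "g = \<sigma> i" using bij g(1) unfolding bij_betw_def by (metis imageE)
    then show ?thesis using g True by auto
  next
    case False
    obtain g where g: "g \<in> P" "good n f P g" "g \<in> cube n - {replicate n False, replicate n True}"
      using exgoodS False by auto
    then obtain k where k: "k \<in> {1..card P}" "g = \<sigma> k" using bij g(1) unfolding bij_betw_def by (metis imageE)
    show ?thesis
    proof (rule ccontr)
      assume nk: "\<not> ?thesis"
      have ng: "\<not> good n f P (\<sigma> i)" if "1 \<le> i" "i \<le> 3" for i using nk that False by auto
      have "k > 3"
      proof (rule ccontr)
        assume "\<not> k > 3"
        then have "k \<le> 3" by simp
        with ng[of k] g k show False by auto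
      qed
      have inj: "inj_on \<sigma> {1..card P}" using bij by (simp add: bij_betw_def)
      have sP: "\<sigma> i \<in> P" if "1 \<le> i" "i \<le> 3" for i
      proof -
        have "i \<in> {1..card P}" using that False by auto
        then show ?thesis using bij_betw_apply[OF bij] by blast
      qed
      have dist: "\<sigma> a \<noteq> \<sigma> b" if "1 \<le> a" "a \<le> 3" "1 \<le> b" "b \<le> 3" "a \<noteq> b" for a b
      proof
        assume e: "\<sigma> a = \<sigma> b"
        have "a \<in> {1..card P}" "b \<in> {1..card P}" using that False by auto
        then have "a = b" using inj_onD[OF inj e] by blast
        then show False using that by simp
      qed
      define E where "E = {replicate n False, replicate n True}"
      obtain i where i: "1 \<le> i" "i \<le> 3" "\<sigma> i \<notin> E"
      proof (cases "\<sigma> 1 \<in> E")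
        case False then show ?thesis using that[of 1] by simp
      next
        case T1: True
        show ?thesis
        proof (cases "\<sigma> 2 \<in> E")
          case False then show ?thesis using that[of 2] by simp
        next
          case T2: True
          have "\<sigma> 3 \<notin> E" using T1 T2 dist[of 1 2] dist[of 1 3] dist[of 2 3] by (auto simp: E_def)
          then show ?thesis using that[of 3] by simp
        qed
      qed
      have xS: "\<sigma> i \<in> P \<inter> pareto_set n f \<inter> (cube n - {replicate n False, replicate n True})"
        using sP[OF i(1,2)] i Pp pc by (auto simp: E_def)
      have gS: "g \<in> P \<inter> pareto_set n f \<inter> (cube n - {replicate n False, replicate n True})"
        using g Pp by auto
      have bd: "bad n f P (\<sigma> i)" using xS ng[OF i(1,2)] by (auto simp: bad_def)
      have "score (\<sigma> i) P < score g P"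
        using df[unfolded diversity_favouring_def, rule_format, OF pop xS gS bd g(2)] .
      moreover have "score (\<sigma> i) P \<ge> score (\<sigma> k) P" using sc[of i k] i k \<open>k > 3\<close> by auto
      ultimately show False using k by simp
    qed
  qed
  then obtain i where i: "1 \<le> i" "i \<le> 3" "i \<le> card P" "good n f P (\<sigma> i)" by blast
  have "Min {r 1, r 2, r 3} \<le> r i"
    using i by (intro Min_le) (auto simp: le_Suc_eq numeral_3_eq_3 numeral_2_eq_2 elim!: le_SucE)
  also have "r i \<le> (\<Sum>i\<in>{i \<in> {1..card P}. good n f P (\<sigma> i)}. r i)"
    using i rnn by (intro member_le_sum) auto
  finally show ?thesis .
qed


theorem lemma3:
  fixes n :: nat and f :: "bool list \<Rightarrow> nat \<times> nat"
    and score :: "bool list \<Rightarrow> bool list set \<Rightarrow> real"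
    and P :: "bool list set" and \<sigma> :: "nat \<Rightarrow> bool list" and r :: "nat \<Rightarrow> real"
  assumes "f = oneminmax \<or> f = lotz"
    and "diversity_favouring n f (cube n - {replicate n False, replicate n True}) score"
    and "population n f P"
    and "P \<subseteq> pareto_set n f"
    and "bij_betw \<sigma> {1..card P} P"
    and "\<And>i j. 1 \<le> i \<Longrightarrow> i \<le> j \<Longrightarrow> j \<le> card P \<Longrightarrow> score (\<sigma> i) P \<ge> score (\<sigma> j) P"
    and "\<And>i. r i \<ge> 0"
    and "(\<Sum>i\<in>{1..card P}. r i) = 1"
    and "f ` P \<noteq> pareto_front n f"
  shows "(\<Sum>i\<in>{i \<in> {1..card P}. good n f P (\<sigma> i)}. r i) \<ge> Min {r 1, r 2, r 3}"
  using assms(1)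
proof
  assume f: "f = oneminmax"
  show ?thesis unfolding f
    by (rule generic[where lev=cnt, OF omm_H1 omm_H3u omm_H3d omm_H4 assms(2-9)[unfolded f]])
next
  assume f: "f = lotz"
  show ?thesis unfolding f
    by (rule generic[where lev=LO, OF lotz_H1 lotz_H3u lotz_H3d lotz_H4 assms(2-9)[unfolded f]])
qed

end
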